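(* Let $M$ be a matroid of rank at least $1$ having two disjoint bases. Then $\chi(\operatorname{KG}(M))=f(M)$.
   Context: The matroid Kneser graph $\operatorname{KG}(M)$ has the bases of $M$ as vertices, two bases being adjacent when they are disjoint; $\chi$ denotes chromatic number. For a matroid $M$, $\mathcal{B}(M)$ denotes its set of bases, and the distance between two bases $B,B'$ is $|B\triangle B'|$; $\operatorname{diam}$ denotes diameter. The Borsuk number $f(M)$ is the minimum number of parts in a partition of $\mathcal{B}(M)$ in which every part has diameter strictly smaller than $\operatorname{diam}(\mathcal{B}(M))$; if $M$ has exactly one basis, $f(M):=+\infty$. *)

theory Defs
  imports Main "HOL-Library.Extended_Nat"
begin

definition matroid_bases :: "'a set \<Rightarrow> 'a set set \<Rightarrow> bool" where
  "matroid_bases E \<B> \<longleftrightarrow> finite E \<and> \<B> \<noteq> {} \<and> (\<forall>B\<in>\<B>. B \<subseteq> E) \<and>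
     (\<forall>B1\<in>\<B>. \<forall>B2\<in>\<B>. \<forall>x\<in>B1 - B2. \<exists>y\<in>B2 - B1. insert y (B1 - {x}) \<in> \<B>)"

text \<open>Rank of the matroid: the common cardinality of its bases.\<close>
definition matroid_rank :: "'a set set \<Rightarrow> nat" where
  "matroid_rank \<B> = card (SOME B. B \<in> \<B>)"

definition chromatic_number :: "'v set \<Rightarrow> ('v \<Rightarrow> 'v \<Rightarrow> bool) \<Rightarrow> nat" where
  "chromatic_number V adj = (LEAST k. \<exists>c :: 'v \<Rightarrow> nat.
      (\<forall>v\<in>V. c v < k) \<and> (\<forall>u\<in>V. \<forall>v\<in>V. adj u v \<longrightarrow> c u \<noteq> c v))"

definition kneser_adj :: "'a set \<Rightarrow> 'a set \<Rightarrow> bool" where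
  "kneser_adj B B' \<longleftrightarrow> B \<inter> B' = {}"

definition chi_KG :: "'a set set \<Rightarrow> nat" where
  "chi_KG \<B> = chromatic_number \<B> kneser_adj"

definition set_diam :: "'a set set \<Rightarrow> nat" where
  "set_diam S = Max {card ((B - B') \<union> (B' - B)) | B B'. B \<in> S \<and> B' \<in> S}"

definition is_partition :: "'b set \<Rightarrow> 'b set set \<Rightarrow> bool" where
  "is_partition X P \<longleftrightarrow> \<Union>P = X \<and> {} \<notin> P \<and>
     (\<forall>p\<in>P. \<forall>q\<in>P. p \<noteq> q \<longrightarrow> p \<inter> q = {})"

definition borsuk_number :: "'a set set \<Rightarrow> enat" where
  "borsuk_number \<B> = (if card \<B> = 1 then \<infinity> else
     enat (LEAST k. \<exists>P. is_partition \<B> P \<and> finite P \<and> card P = k \<and>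
        (\<forall>p\<in>P. set_diam p < set_diam \<B>)))"

end

theory Submission imports Defs begin

lemma bases_card_eq_aux:
  assumes M: "matroid_bases E \<B>"
  shows "\<And>B1. B1 \<in> \<B> \<Longrightarrow> B2 \<in> \<B> \<Longrightarrow> card (B1 - B2) = n \<Longrightarrow> card B1 = card B2"
proof (induction n)
  case 0
  have fin: "finite E" "\<forall>B\<in>\<B>. B \<subseteq> E" using M unfolding matroid_bases_def by auto
  have f1: "finite B1" using fin 0 by (meson finite_subset)
  have "B1 - B2 = {}" using 0 f1 by auto
  moreover have "B2 - B1 = {}"
  proof (rule ccontr)
    assume "B2 - B1 \<noteq> {}"
    then obtain x where "x \<in> B2 - B1" by auto
    then obtain y where "y \<in> B1 - B2" using M 0 unfolding matroid_bases_def by blast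
    thus False using \<open>B1 - B2 = {}\<close> by auto
  qed
  ultimately have "B1 = B2" by auto
  thus ?case by simp
next
  case (Suc n)
  have fin: "finite E" "\<forall>B\<in>\<B>. B \<subseteq> E" using M unfolding matroid_bases_def by auto
  have f1: "finite B1" using fin Suc by (meson finite_subset)
  have "B1 - B2 \<noteq> {}" using Suc.prems(3) by (metis card.empty nat.distinct(1))
  then obtain x where x: "x \<in> B1 - B2" by auto
  then obtain y where y: "y \<in> B2 - B1" and B1': "insert y (B1 - {x}) \<in> \<B>"
    using M Suc.prems unfolding matroid_bases_def by blast
  have "insert y (B1 - {x}) - B2 = (B1 - B2) - {x}" using x y by auto
  hence "card (insert y (B1 - {x}) - B2) = n" using Suc.prems x f1 by simp
  hence "card (insert y (B1 - {x})) = card B2" using Suc.IH B1' Suc.prems by blast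
  moreover have "card (insert y (B1 - {x})) = card B1" using x y f1
    by (simp add: card_Diff_singleton) (metis One_nat_def Suc_pred card_gt_0_iff empty_iff)
  ultimately show ?case by simp
qed

lemma bases_card_eq:
  assumes "matroid_bases E \<B>" "B1 \<in> \<B>" "B2 \<in> \<B>"
  shows "card B1 = card B2"
  using bases_card_eq_aux[OF assms(1) assms(2,3)] by blast

theorem lemma4p5:
  fixes E :: "'a set" and \<B> :: "'a set set"
  assumes "matroid_bases E \<B>"
    and "matroid_rank \<B> \<ge> 1"
    and "\<exists>B1\<in>\<B>. \<exists>B2\<in>\<B>. B1 \<inter> B2 = {}"
  shows "enat (chi_KG \<B>) = borsuk_number \<B>"
proof -
  define r where "r = matroid_rank \<B>"
  have ne: "\<B> \<noteq> {}" and sub: "\<forall>B\<in>\<B>. B \<subseteq> E" and finE: "finite E"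
    using assms(1) unfolding matroid_bases_def by auto
  have some: "(SOME B. B \<in> \<B>) \<in> \<B>" using ne by (simp add: some_in_eq)
  have cardB: "\<And>B. B \<in> \<B> \<Longrightarrow> card B = r"
    unfolding r_def matroid_rank_def using bases_card_eq[OF assms(1) _ some] by blast
  have r1: "r \<ge> 1" using assms(2) r_def by simp
  have "\<B> \<subseteq> Pow E" using sub by blast
  then have finB: "finite \<B>" by (rule finite_subset) (simp add: finE)
  have finb: "\<And>B. B \<in> \<B> \<Longrightarrow> finite B" using finite_subset[OF sub[rule_format] finE] .
  have nonemp: "\<And>B. B \<in> \<B> \<Longrightarrow> B \<noteq> {}" using cardB r1 by fastforce
  have dist: "card ((B - B') \<union> (B' - B)) = 2 * (r - card (B \<inter> B'))"
    if "B \<in> \<B>" "B' \<in> \<B>" for B B'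
  proof -
    have "card ((B - B') \<union> (B' - B)) = card (B - B') + card (B' - B)"
      by (rule card_Un_disjoint) (auto simp: finb that)
    also have "card (B - B') = card B - card (B \<inter> B')"
      by (rule card_Diff_subset_Int) (auto simp: finb that)
    also have "card (B' - B) = card B' - card (B' \<inter> B)"
      by (rule card_Diff_subset_Int) (auto simp: finb that)
    finally show ?thesis using cardB that by (simp add: Int_commute)
  qed
  have distle: "card ((B - B') \<union> (B' - B)) \<le> 2 * r" if "B \<in> \<B>" "B' \<in> \<B>" for B B'
    using dist[OF that] by simp
  have distlt: "card ((B - B') \<union> (B' - B)) < 2 * r \<longleftrightarrow> B \<inter> B' \<noteq> {}"
    if "B \<in> \<B>" "B' \<in> \<B>" for B B'
  proof -
    have "card (B \<inter> B') \<le> r" using cardB[OF that(1)] card_mono[OF finb[OF that(1)] Int_lower1[of B B']]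
      by simp
    moreover have "card (B \<inter> B') = 0 \<longleftrightarrow> B \<inter> B' = {}" using finb[OF that(1)] by simp
    ultimately show ?thesis using dist[OF that] r1 by auto
  qed
  have Dfin: "finite {card ((B - B') \<union> (B' - B)) | B B'. B \<in> S \<and> B' \<in> S}"
    if "S \<subseteq> \<B>" for S
  proof -
    have "{card ((B - B') \<union> (B' - B)) | B B'. B \<in> S \<and> B' \<in> S}
       = (\<lambda>(B, B'). card ((B - B') \<union> (B' - B))) ` (S \<times> S)" by auto
    moreover have "finite S" using finite_subset[OF that finB] .
    ultimately show ?thesis by simp
  qed
  have diamB: "set_diam \<B> = 2 * r"
    unfolding set_diam_def
  proof (rule Max_eqI)
    show "finite {card ((B - B') \<union> (B' - B)) | B B'. B \<in> \<B> \<and> B' \<in> \<B>}" using Dfin by blast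
    show "\<And>y. y \<in> {card ((B - B') \<union> (B' - B)) | B B'. B \<in> \<B> \<and> B' \<in> \<B>} \<Longrightarrow> y \<le> 2 * r"
      using distle by blast
    obtain B1 B2 where b12: "B1 \<in> \<B>" "B2 \<in> \<B>" "B1 \<inter> B2 = {}" using assms(3) by blast
    have d12: "card ((B1 - B2) \<union> (B2 - B1)) = 2 * r" using b12 dist by simp
    show "2 * r \<in> {card ((B - B') \<union> (B' - B)) | B B'. B \<in> \<B> \<and> B' \<in> \<B>}"
      unfolding mem_Collect_eq by (intro exI[of _ B1] exI[of _ B2]) (use b12 d12 in simp)
  qed
  have diam: "set_diam S < set_diam \<B> \<longleftrightarrow> (\<forall>B\<in>S. \<forall>B'\<in>S. B \<inter> B' \<noteq> {})"
    if "S \<subseteq> \<B>" "S \<noteq> {}" for S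
  proof -
    have "set_diam S < 2 * r \<longleftrightarrow>
      (\<forall>d\<in>{card ((B - B') \<union> (B' - B)) | B B'. B \<in> S \<and> B' \<in> S}. d < 2 * r)"
      unfolding set_diam_def using Dfin[OF that(1)] that(2) by (subst Max_less_iff) auto
    also have "\<dots> \<longleftrightarrow> (\<forall>B\<in>S. \<forall>B'\<in>S. B \<inter> B' \<noteq> {})"
    proof
      assume a: "\<forall>d\<in>{card ((B - B') \<union> (B' - B)) | B B'. B \<in> S \<and> B' \<in> S}. d < 2 * r"
      show "\<forall>B\<in>S. \<forall>B'\<in>S. B \<inter> B' \<noteq> {}"
      proof (intro ballI)
        fix B B' assume b: "B \<in> S" "B' \<in> S"
        then have "card ((B - B') \<union> (B' - B)) < 2 * r" using a by blast
        then show "B \<inter> B' \<noteq> {}" using distlt b that(1) by blast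
      qed
    next
      assume a: "\<forall>B\<in>S. \<forall>B'\<in>S. B \<inter> B' \<noteq> {}"
      show "\<forall>d\<in>{card ((B - B') \<union> (B' - B)) | B B'. B \<in> S \<and> B' \<in> S}. d < 2 * r"
      proof
        fix d assume "d \<in> {card ((B - B') \<union> (B' - B)) | B B'. B \<in> S \<and> B' \<in> S}"
        then obtain B B' where b: "B \<in> S" "B' \<in> S" "d = card ((B - B') \<union> (B' - B))" by blast
        then have "B \<in> \<B>" "B' \<in> \<B>" "B \<inter> B' \<noteq> {}" using a that(1) by blast+
        then show "d < 2 * r" using distlt b(3) by blast
      qed
    qed
    finally show ?thesis using diamB by simp
  qed
  have card1: "card \<B> \<noteq> 1"
  proof
    assume "card \<B> = 1"
    then obtain x where "\<B> = {x}" by (rule card_1_singletonE)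
    moreover obtain B1 B2 where "B1 \<in> \<B>" "B2 \<in> \<B>" "B1 \<inter> B2 = {}" using assms(3) by blast
    ultimately have "x \<in> \<B>" "x \<inter> x = {}" by simp_all
    thus False using nonemp by simp
  qed
  define Pk where "Pk k \<longleftrightarrow> (\<exists>P. is_partition \<B> P \<and> finite P \<and> card P = k \<and>
        (\<forall>p\<in>P. set_diam p < set_diam \<B>))" for k
  define Ck where "Ck k \<longleftrightarrow> (\<exists>c :: 'a set \<Rightarrow> nat.
      (\<forall>v\<in>\<B>. c v < k) \<and> (\<forall>u\<in>\<B>. \<forall>v\<in>\<B>. kneser_adj u v \<longrightarrow> c u \<noteq> c v))" for k
  have PC: "Ck m" if "Pk m" for m
  proof -
    obtain P where P: "is_partition \<B> P" "finite P" "card P = m"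
      "\<forall>p\<in>P. set_diam p < set_diam \<B>" using \<open>Pk m\<close> Pk_def by blast
    have Psub: "\<And>p. p \<in> P \<Longrightarrow> p \<subseteq> \<B> \<and> p \<noteq> {}" using P(1) unfolding is_partition_def by auto
    have Pgood: "\<And>p B B'. p \<in> P \<Longrightarrow> B \<in> p \<Longrightarrow> B' \<in> p \<Longrightarrow> B \<inter> B' \<noteq> {}"
    proof -
      fix p B B' assume a: "p \<in> P" "B \<in> p" "B' \<in> p"
      have "set_diam p < set_diam \<B>" using P(4) a(1) by blast
      then have "\<forall>B\<in>p. \<forall>B'\<in>p. B \<inter> B' \<noteq> {}" using diam[of p] Psub[OF a(1)] by blast
      then show "B \<inter> B' \<noteq> {}" using a by blast
    qed
    obtain h where h: "bij_betw h P {0..<card P}" using ex_bij_betw_finite_nat[OF P(2)] by blast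
    define c where "c B = h (SOME p. p \<in> P \<and> B \<in> p)" for B
    have sp: "(SOME p. p \<in> P \<and> B \<in> p) \<in> P \<and> B \<in> (SOME p. p \<in> P \<and> B \<in> p)" if "B \<in> \<B>" for B
    proof -
      have "\<exists>p. p \<in> P \<and> B \<in> p" using P(1) that unfolding is_partition_def by auto
      thus ?thesis by (rule someI_ex)
    qed
    have "\<forall>v\<in>\<B>. c v < m"
    proof
      fix v assume "v \<in> \<B>"
      then have "(SOME p. p \<in> P \<and> v \<in> p) \<in> P" using sp by blast
      then have "c v \<in> {0..<card P}" unfolding c_def by (rule bij_betw_apply[OF h])
      then show "c v < m" using P(3) by simp
    qed
    moreover have "\<forall>u\<in>\<B>. \<forall>v\<in>\<B>. kneser_adj u v \<longrightarrow> c u \<noteq> c v"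
    proof (intro ballI impI notI)
      fix u v assume uv: "u \<in> \<B>" "v \<in> \<B>" "kneser_adj u v" "c u = c v"
      have su: "(SOME p. p \<in> P \<and> u \<in> p) \<in> P" "u \<in> (SOME p. p \<in> P \<and> u \<in> p)"
        using sp uv(1) by blast+
      have sv: "(SOME p. p \<in> P \<and> v \<in> p) \<in> P" "v \<in> (SOME p. p \<in> P \<and> v \<in> p)"
        using sp uv(2) by blast+
      have eq: "(SOME p. p \<in> P \<and> u \<in> p) = (SOME p. p \<in> P \<and> v \<in> p)"
        using inj_onD[OF bij_betw_imp_inj_on[OF h] _ su(1) sv(1)] uv(4) unfolding c_def by blast
      have "u \<inter> v \<noteq> {}" using Pgood[OF su(1) su(2)] sv(2) eq by simp
      thus False using uv(3) unfolding kneser_adj_def by simp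
    qed
    ultimately show ?thesis unfolding Ck_def by blast
  qed
  have CP: "\<exists>m\<le>k. Pk m" if "Ck k" for k
  proof -
    obtain c :: "'a set \<Rightarrow> nat" where c: "\<forall>v\<in>\<B>. c v < k"
      "\<forall>u\<in>\<B>. \<forall>v\<in>\<B>. kneser_adj u v \<longrightarrow> c u \<noteq> c v" using \<open>Ck k\<close> Ck_def by blast
    define P where "P = (\<lambda>i. {B\<in>\<B>. c B = i}) ` {..<k} - {{}}"
    have finP: "finite P" unfolding P_def by simp
    have cardP: "card P \<le> k" unfolding P_def
      by (metis card_Diff1_le card_image_le card_lessThan finite_imageI finite_lessThan le_trans)
    have part: "is_partition \<B> P"
      unfolding is_partition_def
    proof (intro conjI)
      show "\<Union> P = \<B>"
      proof
        show "\<Union> P \<subseteq> \<B>" unfolding P_def by auto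
        show "\<B> \<subseteq> \<Union> P"
        proof
          fix B assume "B \<in> \<B>"
          then have "B \<in> {B'\<in>\<B>. c B' = c B}" "c B < k" using c by auto
          then show "B \<in> \<Union> P" unfolding P_def by blast
        qed
      qed
      show "{} \<notin> P" unfolding P_def by simp
      show "\<forall>p\<in>P. \<forall>q\<in>P. p \<noteq> q \<longrightarrow> p \<inter> q = {}" unfolding P_def by auto
    qed
    have "\<forall>p\<in>P. set_diam p < set_diam \<B>"
    proof
      fix p assume "p \<in> P"
      then obtain i where p: "p = {B\<in>\<B>. c B = i}" "p \<noteq> {}" unfolding P_def by auto
      have "\<forall>B\<in>p. \<forall>B'\<in>p. B \<inter> B' \<noteq> {}"
      proof (intro ballI)
        fix B B' assume "B \<in> p" "B' \<in> p"
        then have "B \<in> \<B>" "B' \<in> \<B>" "c B = c B'" using p(1) by auto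
        then show "B \<inter> B' \<noteq> {}" using c(2) unfolding kneser_adj_def by metis
      qed
      moreover have "p \<subseteq> \<B>" using p(1) by blast
      ultimately show "set_diam p < set_diam \<B>" using diam[of p] p(2) by blast
    qed
    then have "Pk (card P)" unfolding Pk_def using part finP by blast
    thus ?thesis using cardP by blast
  qed
  have Pex: "Pk (card \<B>)"
  proof -
    define P where "P = (\<lambda>B. {B}) ` \<B>"
    have "card P = card \<B>" unfolding P_def by (simp add: card_image inj_on_def)
    moreover have "is_partition \<B> P" unfolding P_def is_partition_def by auto
    moreover have "finite P" unfolding P_def using finB by simp
    moreover have "\<forall>p\<in>P. set_diam p < set_diam \<B>"
    proof
      fix p assume "p \<in> P"
      then obtain B where B: "B \<in> \<B>" "p = {B}" unfolding P_def by blast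
      have "\<forall>B\<in>p. \<forall>B'\<in>p. B \<inter> B' \<noteq> {}" using B nonemp by simp
      then show "set_diam p < set_diam \<B>" using diam[of p] B by blast
    qed
    ultimately show ?thesis unfolding Pk_def by blast
  qed
  have Cex: "Ck (LEAST k. Pk k)" using PC LeastI[of Pk, OF Pex] by blast
  have le1: "(LEAST k. Ck k) \<le> (LEAST k. Pk k)" using Cex by (rule Least_le)
  have "Ck (LEAST k. Ck k)" using Cex by (rule LeastI)
  then obtain m where "m \<le> (LEAST k. Ck k)" "Pk m" using CP by blast
  then have le2: "(LEAST k. Pk k) \<le> (LEAST k. Ck k)" using Least_le[of Pk m] by linarith
  have "chi_KG \<B> = (LEAST k. Ck k)" unfolding chi_KG_def chromatic_number_def Ck_def by simp
  moreover have "borsuk_number \<B> = enat (LEAST k. Pk k)"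
    unfolding borsuk_number_def Pk_def using card1 by simp
  ultimately show ?thesis using le1 le2 by simp
qed

end
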